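(* There is an absolute constant $C>0$ such that the following holds. Let $G(V,E)$ be a graph with nonnegative edge weights $w$, let $k\ge c\ge 2$ be integers, let $G^{(1)},\ldots,G^{(k)}$ be a random $k$-clustering of $G$ with expected multiplicity $c$, let $\pi$ be a permutation of $E$ in non-increasing order of weight, $M_i:=\mathsf{Greedy}(G^{(i)},\pi)$, and $H$ the graph on $V$ with edge set $\bigcup_i M_i$. Fix a maximum weight matching $M^*$ of $G$, and let $F_1\subseteq M^*$ be the set of edges $e\in M^*$ that are free for machine $1$ (no endpoint of $e$ is matched by $\mathsf{Greedy}(G^{(1)},\pi^{<e})$), and $F'_1:=F_1\cap E(H)$. Then $$\mathbb{E}[w(F'_1)] \geq \mathbb{E}[w(F_1)] - C\cdot\frac{\log c}{c}\cdot \mathrm{opt}(G).$$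
   Context: $\mathrm{opt}(G)$ is the weight of a maximum weight matching; $w(S)$ is the total weight of an edge set $S$. $\mathsf{Greedy}(G,\pi)$ scans the edges of $G$ in order $\pi$ and adds $(u,v)$ iff neither endpoint is matched; $\mathsf{Greedy}(G^{(1)},\pi^{<e})$ means running it on $G^{(1)}$ and stopping just before processing $e$. A random $k$-clustering with expected multiplicity $c$: independently for each edge $e$, draw $c_e\sim\mathrm{Bin}(k,c/k)$ and place $e$ in $c_e$ distinct uniformly random sets among $E^{(1)},\ldots,E^{(k)}$; $G^{(i)}=G(V,E^{(i)})$. Expectations are over the random clustering. *)

theory Defs
  imports "HOL-Probability.Probability"
begin

definition simple_graph :: "nat set \<Rightarrow> nat set set \<Rightarrow> bool" where
  "simple_graph V E \<longleftrightarrow> finite V \<and> (\<forall>e\<in>E. e \<subseteq> V \<and> card e = 2)"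

definition is_matching :: "nat set set \<Rightarrow> bool" where
  "is_matching M \<longleftrightarrow> (\<forall>e\<in>M. \<forall>f\<in>M. e \<noteq> f \<longrightarrow> e \<inter> f = {})"

definition wt :: "(nat set \<Rightarrow> real) \<Rightarrow> nat set set \<Rightarrow> real" where
  "wt w S = (\<Sum>e\<in>S. w e)"

definition opt :: "nat set set \<Rightarrow> (nat set \<Rightarrow> real) \<Rightarrow> real" where
  "opt E w = Max {wt w M | M. M \<subseteq> E \<and> is_matching M}"

definition greedy :: "nat set list \<Rightarrow> nat set set" where
  "greedy es = foldl (\<lambda>M e. if (\<forall>f\<in>M. e \<inter> f = {}) then insert e M else M) {} es"

text \<open>Edge set of machine i under a clustering assigning each edge a set of machines.\<close>
definition cluster_edges :: "nat set set \<Rightarrow> (nat set \<Rightarrow> nat set) \<Rightarrow> nat \<Rightarrow> nat set set" where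
  "cluster_edges E A i = {e\<in>E. i \<in> A e}"

definition greedy_machine :: "nat set set \<Rightarrow> (nat set \<Rightarrow> nat set) \<Rightarrow> nat \<Rightarrow> nat set list \<Rightarrow> nat set set" where
  "greedy_machine E A i \<pi> = greedy (filter (\<lambda>e. e \<in> cluster_edges E A i) \<pi>)"

text \<open>Per-edge distribution: c_e ~ Bin(k, c/k), then a uniformly random c_e-subset of the k machines
  (machines are indexed 0..k-1).\<close>
definition edge_clusters :: "nat \<Rightarrow> nat \<Rightarrow> nat set pmf" where
  "edge_clusters k c = binomial_pmf k (real c / real k) \<bind>
      (\<lambda>m. pmf_of_set {S. S \<subseteq> {..<k} \<and> card S = m})"

definition random_clustering :: "nat set set \<Rightarrow> nat \<Rightarrow> nat \<Rightarrow> (nat set \<Rightarrow> nat set) pmf" where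
  "random_clustering E k c = Pi_pmf E {} (\<lambda>e. edge_clusters k c)"

text \<open>F_1: edges of M* free for machine 1 (index 0): no endpoint matched by Greedy(G^(1), pi^{<e}).\<close>
definition free_edges :: "nat set set \<Rightarrow> nat set list \<Rightarrow> nat set set \<Rightarrow> (nat set \<Rightarrow> nat set) \<Rightarrow> nat set set" where
  "free_edges E \<pi> Mstar A =
     {e\<in>Mstar. \<forall>f\<in>greedy_machine E A 0 (takeWhile (\<lambda>x. x \<noteq> e) \<pi>). e \<inter> f = {}}"

definition H_edges :: "nat set set \<Rightarrow> nat \<Rightarrow> nat set list \<Rightarrow> (nat set \<Rightarrow> nat set) \<Rightarrow> nat set set" where
  "H_edges E k \<pi> A = (\<Union>i<k. greedy_machine E A i \<pi>)"

end

theory Submission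
  imports Defs
begin


lemma edge_clusters_alt:
  assumes p0: "0 \<le> p" and p1: "p \<le> 1"
  shows "binomial_pmf k p \<bind> (\<lambda>m. pmf_of_set {S. S \<subseteq> {..<k} \<and> card S = m})
       = map_pmf (\<lambda>b. {i\<in>{..<k}. b i}) (Pi_pmf {..<k} False (\<lambda>_. bernoulli_pmf p))"
    (is "?L = ?R")
proof (rule pmf_eqI)
  fix S :: "nat set"
  define Q where "Q = Pi_pmf {..<k} False (\<lambda>_. bernoulli_pmf p)"
  define \<Phi> where "\<Phi> = (\<lambda>b::nat\<Rightarrow>bool. {i\<in>{..<k}. b i})"
  have setQ: "set_pmf Q \<subseteq> {b. \<forall>x. x \<notin> {..<k} \<longrightarrow> b x = False}"
    unfolding Q_def by (rule set_Pi_pmf_subset) simp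
  have pre: "\<Phi> -` {S} \<inter> set_pmf Q = (if S \<subseteq> {..<k} then {(\<lambda>i. i \<in> S)} \<inter> set_pmf Q else {})"
  proof (cases "S \<subseteq> {..<k}")
    case True
    show ?thesis
    proof (rule set_eqI, rule iffI)
      fix b assume b: "b \<in> \<Phi> -` {S} \<inter> set_pmf Q"
      then have "\<forall>x. x \<notin> {..<k} \<longrightarrow> b x = False" using setQ by auto
      then have "b = (\<lambda>i. i \<in> S)" using b unfolding \<Phi>_def by (auto simp: fun_eq_iff)
      then show "b \<in> (if S \<subseteq> {..<k} then {(\<lambda>i. i \<in> S)} \<inter> set_pmf Q else {})" using b True by auto
    next
      fix b assume "b \<in> (if S \<subseteq> {..<k} then {(\<lambda>i. i \<in> S)} \<inter> set_pmf Q else {})"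
      then show "b \<in> \<Phi> -` {S} \<inter> set_pmf Q" using True unfolding \<Phi>_def by auto
    qed
  next
    case False
    then show ?thesis unfolding \<Phi>_def by auto
  qed
  have R: "pmf ?R S = (if S \<subseteq> {..<k} then p ^ card S * (1-p) ^ (k - card S) else 0)"
  proof -
    have "pmf ?R S = measure Q (\<Phi> -` {S})" unfolding Q_def \<Phi>_def by (rule pmf_map)
    also have "\<dots> = measure Q (\<Phi> -` {S} \<inter> set_pmf Q)" by (simp add: measure_Int_set_pmf)
    also have "\<dots> = (if S \<subseteq> {..<k} then pmf Q (\<lambda>i. i \<in> S) else 0)"
      unfolding pre by (auto simp: measure_Int_set_pmf measure_pmf_single)
    also have "\<dots> = (if S \<subseteq> {..<k} then p ^ card S * (1-p) ^ (k - card S) else 0)"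
    proof (cases "S \<subseteq> {..<k}")
      case True
      have "pmf Q (\<lambda>i. i \<in> S) = (\<Prod>i\<in>{..<k}. pmf (bernoulli_pmf p) (i \<in> S))"
        unfolding Q_def using True by (subst pmf_Pi) auto
      also have "\<dots> = (\<Prod>i\<in>{..<k}. if i \<in> S then p else 1 - p)"
        using p0 p1 by (intro prod.cong) auto
      also have "\<dots> = (\<Prod>i\<in>{..<k} \<inter> {i. i \<in> S}. p) * (\<Prod>i\<in>{..<k} \<inter> - {i. i \<in> S}. 1 - p)"
        by (rule prod.If_cases) simp
      also have "{..<k} \<inter> {i. i \<in> S} = S" using True by auto
      also have "{..<k} \<inter> - {i. i \<in> S} = {..<k} - S" by auto
      finally have "pmf Q (\<lambda>i. i \<in> S) = p ^ card S * (1-p) ^ card ({..<k} - S)" by simp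
      then show ?thesis using True by (simp add: card_Diff_subset finite_subset)
    qed simp
    finally show ?thesis .
  qed
  define Sets where "Sets = (\<lambda>m. {T. T \<subseteq> {..<k} \<and> card T = m})"
  have fin: "finite (Sets m)" for m unfolding Sets_def
    by (rule finite_subset[of _ "Pow {..<k}"]) auto
  have ne: "Sets m \<noteq> {}" if "m \<le> k" for m
  proof -
    have "{..<m} \<in> Sets m" using that unfolding Sets_def by auto
    then show ?thesis by auto
  qed
  have cardS: "card (Sets m) = k choose m" for m
    unfolding Sets_def using n_subsets[of "{..<k}" m] by simp
  have setb: "set_pmf (binomial_pmf k p) \<subseteq> {..k}"
    using p0 p1 by (auto simp: set_pmf_binomial_eq split: if_splits)
  have "pmf ?L S = (\<integral>m. pmf (pmf_of_set (Sets m)) S \<partial>measure_pmf (binomial_pmf k p))"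
    unfolding Sets_def by (rule pmf_bind)
  also have "\<dots> = (\<Sum>m\<in>{card S}. pmf (pmf_of_set (Sets m)) S * pmf (binomial_pmf k p) m)"
  proof (rule integral_measure_pmf_real)
    fix m assume m: "m \<in> set_pmf (binomial_pmf k p)" and nz: "pmf (pmf_of_set (Sets m)) S \<noteq> 0"
    have "m \<le> k" using m setb by auto
    then have "S \<in> Sets m" using nz fin[of m] ne[of m] by (auto simp: indicator_def)
    then show "m \<in> {card S}" unfolding Sets_def by auto
  qed simp
  also have "\<dots> = (if S \<subseteq> {..<k} then p ^ card S * (1-p) ^ (k - card S) else 0)"
  proof (cases "card S \<le> k")
    case True
    have "pmf (pmf_of_set (Sets (card S))) S = indicator (Sets (card S)) S / real (k choose card S)"
      using fin ne[OF True] cardS by simp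
    moreover have "(k choose card S) > 0" using True by simp
    ultimately show ?thesis using p0 p1 unfolding Sets_def by (auto simp: indicator_def)
  next
    case False
    then have "\<not> S \<subseteq> {..<k}"
      by (metis card_lessThan card_mono finite_lessThan)
    then show ?thesis using False p0 p1 by simp
  qed
  finally show "pmf ?L S = pmf ?R S" using R by simp
qed


lemma Pi_pmf_swap:
  assumes fE: "finite E" and fK: "finite K"
  shows "Pi_pmf E (\<lambda>_. False) (\<lambda>_. Pi_pmf K False (\<lambda>_. D))
       = map_pmf (\<lambda>B e i. B i e) (Pi_pmf K (\<lambda>_. False) (\<lambda>_. Pi_pmf E False (\<lambda>_. D)))"
    (is "?L = map_pmf ?T ?P")
proof (rule pmf_eqI)
  fix f :: "'a \<Rightarrow> 'b \<Rightarrow> bool"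
  have inj: "inj ?T" by (auto simp: inj_def fun_eq_iff)
  have R: "pmf (map_pmf ?T ?P) f = pmf ?P (\<lambda>i e. f e i)"
    using pmf_map_inj'[OF inj, of ?P "\<lambda>i e. f e i"] by simp
  have pL: "pmf ?L f = (if (\<forall>x. x \<notin> E \<longrightarrow> f x = (\<lambda>_. False))
       then \<Prod>x\<in>E. pmf (Pi_pmf K False (\<lambda>_. D)) (f x) else 0)"
    by (rule pmf_Pi[OF fE])
  have pLi: "pmf (Pi_pmf K False (\<lambda>_. D)) (f x) = (if (\<forall>i. i \<notin> K \<longrightarrow> f x i = False)
       then \<Prod>i\<in>K. pmf D (f x i) else 0)" for x
    by (rule pmf_Pi[OF fK])
  have pP: "pmf ?P (\<lambda>i e. f e i) = (if (\<forall>i. i \<notin> K \<longrightarrow> (\<lambda>e. f e i) = (\<lambda>_. False))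
       then \<Prod>i\<in>K. pmf (Pi_pmf E False (\<lambda>_. D)) (\<lambda>e. f e i) else 0)"
    by (rule pmf_Pi[OF fK])
  have pPi: "pmf (Pi_pmf E False (\<lambda>_. D)) (\<lambda>e. f e i) = (if (\<forall>x. x \<notin> E \<longrightarrow> f x i = False)
       then \<Prod>x\<in>E. pmf D (f x i) else 0)" for i
    by (rule pmf_Pi[OF fE])
  show "pmf ?L f = pmf (map_pmf ?T ?P) f"
  proof (cases "\<forall>e i. (e \<notin> E \<or> i \<notin> K) \<longrightarrow> \<not> f e i")
    case True
    have c1: "\<forall>x. x \<notin> E \<longrightarrow> f x = (\<lambda>_. False)" using True by auto
    have c2: "\<forall>i. i \<notin> K \<longrightarrow> (\<lambda>e. f e i) = (\<lambda>_. False)" using True by auto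
    have "pmf ?L f = (\<Prod>e\<in>E. pmf (Pi_pmf K False (\<lambda>_. D)) (f e))"
      unfolding pL by (rule if_P[OF c1])
    also have "\<dots> = (\<Prod>e\<in>E. \<Prod>i\<in>K. pmf D (f e i))"
    proof (rule prod.cong[OF refl])
      fix x assume "x \<in> E"
      have "\<forall>i. i \<notin> K \<longrightarrow> f x i = False" using True by blast
      then show "pmf (Pi_pmf K False (\<lambda>_. D)) (f x) = (\<Prod>i\<in>K. pmf D (f x i))"
        unfolding pLi[of x] by (rule if_P)
    qed
    finally have 1: "pmf ?L f = (\<Prod>e\<in>E. \<Prod>i\<in>K. pmf D (f e i))" .
    have "pmf ?P (\<lambda>i e. f e i) = (\<Prod>i\<in>K. pmf (Pi_pmf E False (\<lambda>_. D)) (\<lambda>e. f e i))"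
      unfolding pP by (rule if_P[OF c2])
    also have "\<dots> = (\<Prod>i\<in>K. \<Prod>e\<in>E. pmf D (f e i))"
    proof (rule prod.cong[OF refl])
      fix i assume "i \<in> K"
      have "\<forall>x. x \<notin> E \<longrightarrow> f x i = False" using True by blast
      then show "pmf (Pi_pmf E False (\<lambda>_. D)) (\<lambda>e. f e i) = (\<Prod>x\<in>E. pmf D (f x i))"
        unfolding pPi[of i] by (rule if_P)
    qed
    finally have 2: "pmf ?P (\<lambda>i e. f e i) = (\<Prod>i\<in>K. \<Prod>e\<in>E. pmf D (f e i))" .
    have "(\<Prod>e\<in>E. \<Prod>i\<in>K. pmf D (f e i)) = (\<Prod>i\<in>K. \<Prod>e\<in>E. pmf D (f e i))"
      by (rule prod.swap)
    then show ?thesis using 1 2 R by simp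
  next
    case False
    then obtain e i where fei: "f e i" and ei: "e \<notin> E \<or> i \<notin> K" by blast
    have L0: "pmf ?L f = 0"
    proof (cases "e \<in> E")
      case True
      then have "i \<notin> K" using ei by blast
      then have "\<not> (\<forall>i. i \<notin> K \<longrightarrow> f e i = False)" using fei by blast
      then have "pmf (Pi_pmf K False (\<lambda>_. D)) (f e) = 0" unfolding pLi[of e] by (rule if_not_P)
      then have "(\<Prod>e\<in>E. pmf (Pi_pmf K False (\<lambda>_. D)) (f e)) = 0"
        using True fE by (intro prod_zero) blast+
      then show ?thesis unfolding pL by simp
    next
      case False
      then have "\<not> (\<forall>x. x \<notin> E \<longrightarrow> f x = (\<lambda>_. False))" using fei by metis
      then show ?thesis unfolding pL by (rule if_not_P)
    qed
    have R0: "pmf ?P (\<lambda>i e. f e i) = 0"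
    proof (cases "i \<in> K")
      case True
      then have "e \<notin> E" using ei by blast
      then have "\<not> (\<forall>x. x \<notin> E \<longrightarrow> f x i = False)" using fei by blast
      then have "pmf (Pi_pmf E False (\<lambda>_. D)) (\<lambda>e. f e i) = 0" unfolding pPi[of i] by (rule if_not_P)
      then have "(\<Prod>i\<in>K. pmf (Pi_pmf E False (\<lambda>_. D)) (\<lambda>e. f e i)) = 0"
        using True fK by (intro prod_zero) blast+
      then show ?thesis unfolding pP by simp
    next
      case False
      then have "\<not> (\<forall>x. x \<notin> K \<longrightarrow> (\<lambda>e. f e x) = (\<lambda>_. False))" using fei by metis
      then show ?thesis unfolding pP by (rule if_not_P)
    qed
    show ?thesis using L0 R0 R by simp
  qed
qed


definition gmb :: "nat set set \<Rightarrow> (nat set \<Rightarrow> bool) \<Rightarrow> nat set list \<Rightarrow> nat set set" where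
  "gmb E b \<rho> = greedy (filter (\<lambda>f. f \<in> E \<and> b f) \<rho>)"

definition Xf :: "nat set set \<Rightarrow> nat set list \<Rightarrow> nat set \<Rightarrow> (nat set \<Rightarrow> bool) \<Rightarrow> bool" where
  "Xf E \<pi> e b = (\<forall>f\<in>gmb E b (takeWhile (\<lambda>x. x \<noteq> e) \<pi>). e \<inter> f = {})"

lemma greedy_machine_Psi:
  assumes "i < k"
  shows "greedy_machine E (\<lambda>e. {j\<in>{..<k}. B j e}) i \<rho> = gmb E (B i) \<rho>"
  using assms unfolding greedy_machine_def cluster_edges_def gmb_def by simp

lemma foldl_greedy_mono:
  "M \<subseteq> foldl (\<lambda>M e. if (\<forall>f\<in>M. e \<inter> f = {}) then insert e M else M) M xs"
proof (induction xs arbitrary: M)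
  case Nil then show ?case by simp
next
  case (Cons x xs)
  let ?s = "\<lambda>M e. if (\<forall>f\<in>M. e \<inter> f = {}) then insert e M else M"
  have "M \<subseteq> ?s M x" by auto
  also have "\<dots> \<subseteq> foldl ?s (?s M x) xs" by (rule Cons.IH)
  finally show ?case by simp
qed

lemma free_in:
  assumes "e \<in> set \<pi>" "e \<in> E" "b e" "Xf E \<pi> e b"
  shows "e \<in> gmb E b \<pi>"
proof -
  let ?P = "\<lambda>x. x \<noteq> e"
  let ?s = "\<lambda>M e. if (\<forall>f\<in>M. e \<inter> f = {}) then insert e M else M"
  have "dropWhile ?P \<pi> \<noteq> []" using assms(1) by (auto simp: dropWhile_eq_Nil_conv)
  moreover have "hd (dropWhile ?P \<pi>) = e"
    using assms(1) by (metis (mono_tags) hd_dropWhile \<open>dropWhile ?P \<pi> \<noteq> []\<close>)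
  ultimately obtain rest where dw: "dropWhile ?P \<pi> = e # rest"
    by (metis list.collapse)
  have pi: "\<pi> = takeWhile ?P \<pi> @ e # rest" using dw takeWhile_dropWhile_id by metis
  define M where "M = gmb E b (takeWhile ?P \<pi>)"
  have M: "M = foldl ?s {} (filter (\<lambda>f. f \<in> E \<and> b f) (takeWhile ?P \<pi>))"
    unfolding M_def gmb_def greedy_def by simp
  have "gmb E b \<pi> = foldl ?s (?s M e) (filter (\<lambda>f. f \<in> E \<and> b f) rest)"
    unfolding M gmb_def greedy_def using assms(2,3) by (subst pi) simp
  moreover have "?s M e = insert e M" using assms(4) unfolding Xf_def M_def by auto
  ultimately show ?thesis using foldl_greedy_mono[of "insert e M"] by auto
qed

lemma Xf_upd: "Xf E \<pi> e (b(e := y)) = Xf E \<pi> e b"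
proof -
  have "filter (\<lambda>f. f \<in> E \<and> (b(e := y)) f) (takeWhile (\<lambda>x. x \<noteq> e) \<pi>)
      = filter (\<lambda>f. f \<in> E \<and> b f) (takeWhile (\<lambda>x. x \<noteq> e) \<pi>)"
    by (rule filter_cong) (auto dest: set_takeWhileD)
  then show ?thesis unfolding Xf_def gmb_def by simp
qed

lemma finite_set_Pi_pmf:
  assumes "finite A" "\<And>x. x \<in> A \<Longrightarrow> finite (set_pmf (p x))"
  shows "finite (set_pmf (Pi_pmf A d p))"
  using assms by (simp add: set_Pi_pmf finite_PiE_dflt)

lemma expectation_pair_prod:
  fixes f :: "'a \<Rightarrow> real" and g :: "'b \<Rightarrow> real"
  assumes fA: "finite (set_pmf A)" and fB: "finite (set_pmf B)"
  shows "measure_pmf.expectation (pair_pmf A B) (\<lambda>z. f (fst z) * g (snd z))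
       = measure_pmf.expectation A f * measure_pmf.expectation B g"
proof -
  have "measure_pmf.expectation (pair_pmf A B) (\<lambda>z. f (fst z) * g (snd z))
      = (\<Sum>z\<in>set_pmf A \<times> set_pmf B. f (fst z) * g (snd z) * pmf (pair_pmf A B) z)"
    by (rule integral_measure_pmf_real) (use fA fB in auto)
  also have "\<dots> = (\<Sum>a\<in>set_pmf A. \<Sum>b\<in>set_pmf B. (f a * pmf A a) * (g b * pmf B b))"
    by (simp add: sum.cartesian_product case_prod_beta mult_ac)
       (intro sum.cong refl, metis pmf_pair prod.collapse)
  also have "\<dots> = (\<Sum>a\<in>set_pmf A. f a * pmf A a) * (\<Sum>b\<in>set_pmf B. g b * pmf B b)"
    by (simp add: sum_product)
  also have "\<dots> = measure_pmf.expectation A f * measure_pmf.expectation B g"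
    by (subst (1 2) integral_measure_pmf_real[where A="set_pmf _"]) (use fA fB in auto)
  finally show ?thesis .
qed


lemma arith_bound:
  fixes p a :: real and c k :: nat
  assumes p0: "0 \<le> p" and p1: "p \<le> 1" and a0: "0 \<le> a" and ap: "a \<le> p"
    and c2: "2 \<le> c" and ck: "c \<le> k"
  shows "a * (1 - (real c / real k) * p) ^ (k - 1) \<le> 2 / real c"
proof -
  define q where "q = real c / real k"
  have k0: "real k > 0" using c2 ck by simp
  have q0: "0 \<le> q" and q1: "q \<le> 1" using ck k0 unfolding q_def by auto
  have x0: "0 \<le> 1 - q * p" using q0 q1 p0 p1 by (simp add: mult_le_one)
  have "(1 - q * p) ^ (k - 1) \<le> exp (- (q * p)) ^ (k - 1)"
    by (rule power_mono) (use x0 exp_ge_add_one_self[of "- (q*p)"] in auto)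
  also have "\<dots> = exp (- (real (k - 1) * q * p))"
    by (simp add: exp_of_nat_mult[symmetric] mult_ac)
  also have "\<dots> \<le> exp (- (real c / 2 * p))"
  proof -
    have "real (k - 1) * q = real c * (real k - 1) / real k"
      using c2 ck unfolding q_def by (simp add: of_nat_diff)
    also have "\<dots> \<ge> real c / 2"
      using c2 ck k0 by (simp add: field_simps)
    finally have "real (k - 1) * q \<ge> real c / 2" .
    then have "real (k - 1) * q * p \<ge> real c / 2 * p" using p0 by (rule mult_right_mono)
    then show ?thesis by simp
  qed
  finally have 1: "(1 - q * p) ^ (k - 1) \<le> exp (- (real c / 2 * p))" .
  have "a * (1 - q * p) ^ (k - 1) \<le> p * exp (- (real c / 2 * p))"
    by (rule mult_mono) (use ap 1 p0 x0 in auto)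
  also have "\<dots> \<le> 2 / real c"
  proof -
    define y where "y = real c / 2 * p"
    have y: "p = 2 / real c * y" using c2 unfolding y_def by simp
    have "y * exp (- y) \<le> 1"
    proof -
      have "y \<le> exp y" using exp_ge_add_one_self[of y] by linarith
      then have "y * exp (-y) \<le> exp y * exp (-y)" by (simp add: mult_right_mono)
      then show ?thesis by (simp add: exp_minus)
    qed
    then have "2 / real c * (y * exp (- y)) \<le> 2 / real c * 1"
      by (rule mult_left_mono) simp
    then show ?thesis unfolding y_def[symmetric] using y by (simp add: mult_ac)
  qed
  finally show ?thesis unfolding q_def .
qed


lemma rc_alt:
  assumes fE: "finite E" and ck: "c \<le> k" and k0: "0 < k"
  shows "random_clustering E k c = map_pmf (\<lambda>B e. {i\<in>{..<k}. B i e})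
           (Pi_pmf {..<k} (\<lambda>_. False) (\<lambda>_. Pi_pmf E False (\<lambda>_. bernoulli_pmf (real c / real k))))"
proof -
  define q where "q = real c / real k"
  have q0: "0 \<le> q" and q1: "q \<le> 1" using ck k0 unfolding q_def by auto
  define \<Phi> where "\<Phi> = (\<lambda>b::nat\<Rightarrow>bool. {i\<in>{..<k}. b i})"
  define Qk where "Qk = Pi_pmf {..<k} False (\<lambda>_. bernoulli_pmf q)"
  have "random_clustering E k c = Pi_pmf E {} (\<lambda>e. map_pmf \<Phi> Qk)"
    unfolding random_clustering_def edge_clusters_def \<Phi>_def Qk_def q_def
    using edge_clusters_alt[OF q0 q1, of k] q_def by simp
  also have "\<dots> = map_pmf (\<lambda>h. \<Phi> \<circ> h) (Pi_pmf E (\<lambda>_. False) (\<lambda>_. Qk))"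
    by (rule Pi_pmf_map) (use fE in \<open>auto simp: \<Phi>_def\<close>)
  also have "Pi_pmf E (\<lambda>_. False) (\<lambda>_. Qk) = map_pmf (\<lambda>B e i. B i e)
      (Pi_pmf {..<k} (\<lambda>_. False) (\<lambda>_. Pi_pmf E False (\<lambda>_. bernoulli_pmf q)))"
    unfolding Qk_def by (rule Pi_pmf_swap) (use fE in auto)
  finally show ?thesis by (simp add: pmf.map_comp o_def \<Phi>_def q_def)
qed


lemma edge_bound:
  assumes fE: "finite E" and eE: "e \<in> E" and epi: "e \<in> set \<pi>" and eM: "e \<in> Mstar"
    and c2: "2 \<le> c" and ck: "c \<le> k"
  shows "measure_pmf.expectation (random_clustering E k c)
     (\<lambda>A. if e \<in> free_edges E \<pi> Mstar A \<and> e \<notin> H_edges E k \<pi> A then 1 else 0 :: real)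
     \<le> 2 / real c"
proof -
  have k0: "0 < k" using c2 ck by simp
  define q where "q = real c / real k"
  have q0: "0 \<le> q" and q1: "q \<le> 1" using ck k0 unfolding q_def by auto
  define Qe where "Qe = Pi_pmf E False (\<lambda>_. bernoulli_pmf q)"
  define P where "P = Pi_pmf {..<k} (\<lambda>_. False) (\<lambda>_. Qe)"
  define \<Psi> where "\<Psi> = (\<lambda>(B::nat \<Rightarrow> nat set \<Rightarrow> bool) e. {i\<in>{..<k}. B i e})"
  define X where "X = Xf E \<pi> e"
  define h where "h = (\<lambda>(i::nat) (b::nat set \<Rightarrow> bool). if i = 0 then (if X b \<and> \<not> b e then 1 else 0)
                   else (if b e \<and> X b then 0 else 1 :: real))"
  define g where "g = (\<lambda>A. if e \<in> free_edges E \<pi> Mstar A \<and> e \<notin> H_edges E k \<pi> A then 1 else 0 :: real)"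
  have finB: "finite (set_pmf (bernoulli_pmf q))" by (rule finite_subset[of _ UNIV]) auto
  have finQe: "finite (set_pmf Qe)" unfolding Qe_def
    by (rule finite_set_Pi_pmf) (use fE finB in auto)
  have finP: "finite (set_pmf P)" unfolding P_def
    by (rule finite_set_Pi_pmf) (use finQe in auto)
  have R: "random_clustering E k c = map_pmf \<Psi> P"
    unfolding P_def Qe_def \<Psi>_def q_def by (rule rc_alt[OF fE ck k0])
  have gm0: "greedy_machine E (\<Psi> B) i \<rho> = gmb E (B i) \<rho>" if "i < k" for B and i :: nat and \<rho>
    unfolding \<Psi>_def by (rule greedy_machine_Psi[OF that])
  have free_iff: "e \<in> free_edges E \<pi> Mstar (\<Psi> B) \<longleftrightarrow> X (B 0)" for B
    using eM unfolding free_edges_def X_def Xf_def gm0[OF k0] by simp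
  have H_iff: "e \<in> H_edges E k \<pi> (\<Psi> B) \<longleftrightarrow> (\<exists>i<k. e \<in> gmb E (B i) \<pi>)" for B
    unfolding H_edges_def using gm0 by auto
  have h01: "0 \<le> h i b \<and> h i b \<le> 1" for i b unfolding h_def by auto
  have pw: "g (\<Psi> B) \<le> (\<Prod>i\<in>{..<k}. h i (B i))" for B
  proof (cases "e \<in> free_edges E \<pi> Mstar (\<Psi> B) \<and> e \<notin> H_edges E k \<pi> (\<Psi> B)")
    case True
    then have X0: "X (B 0)" and nH: "\<forall>i<k. e \<notin> gmb E (B i) \<pi>"
      using free_iff H_iff by auto
    have notb: "\<not> (B i e \<and> X (B i))" if "i < k" for i
      using free_in[OF epi eE, of "B i"] nH that unfolding X_def by auto
    have "h i (B i) = 1" if "i \<in> {..<k}" for i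
      using X0 notb[of i] notb[of 0] k0 that unfolding h_def by auto
    then have "(\<Prod>i\<in>{..<k}. h i (B i)) = 1" by simp
    then show ?thesis unfolding g_def using True by simp
  next
    case False
    then have "g (\<Psi> B) = 0" unfolding g_def by auto
    moreover have "0 \<le> (\<Prod>i\<in>{..<k}. h i (B i))" using h01 by (simp add: prod_nonneg)
    ultimately show ?thesis by simp
  qed
  have "measure_pmf.expectation (random_clustering E k c) g = measure_pmf.expectation P (\<lambda>B. g (\<Psi> B))"
    unfolding R by simp
  also have "\<dots> \<le> measure_pmf.expectation P (\<lambda>B. \<Prod>i\<in>{..<k}. h i (B i))"
    by (rule Bochner_Integration.integral_mono) (use pw finP in \<open>auto intro: integrable_measure_pmf_finite\<close>)
  also have "\<dots> = (\<Prod>i\<in>{..<k}. measure_pmf.expectation Qe (h i))"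
    unfolding P_def
    by (rule expectation_prod_Pi_pmf) (use finQe h01 in \<open>auto intro: integrable_measure_pmf_finite\<close>)
  finally have main: "measure_pmf.expectation (random_clustering E k c) g
       \<le> (\<Prod>i\<in>{..<k}. measure_pmf.expectation Qe (h i))" .
  define Qr where "Qr = Pi_pmf (E - {e}) False (\<lambda>_. bernoulli_pmf q)"
  have finQr: "finite (set_pmf Qr)" unfolding Qr_def
    by (rule finite_set_Pi_pmf) (use fE finB in auto)
  have Qe_ins: "Qe = map_pmf (\<lambda>(y,f). f(e:=y)) (pair_pmf (bernoulli_pmf q) Qr)"
  proof -
    have "E = insert e (E - {e})" using eE by auto
    then have "Qe = Pi_pmf (insert e (E - {e})) False (\<lambda>_. bernoulli_pmf q)" unfolding Qe_def by simp
    also have "\<dots> = map_pmf (\<lambda>(y,f). f(e:=y)) (pair_pmf (bernoulli_pmf q) Qr)"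
      unfolding Qr_def by (rule Pi_pmf_insert) (use fE in auto)
    finally show ?thesis .
  qed
  define pr where "pr = measure_pmf.expectation Qr (\<lambda>f. if X f then 1 else 0 :: real)"
  have XE: "measure_pmf.expectation Qe (\<lambda>b. if b e \<and> X b then 1 else 0 :: real) = q * pr"
  proof -
    have "measure_pmf.expectation Qe (\<lambda>b. if b e \<and> X b then 1 else 0 :: real)
        = measure_pmf.expectation (pair_pmf (bernoulli_pmf q) Qr)
            (\<lambda>z. (if fst z \<and> X (snd z) then 1 else 0 :: real))"
      unfolding Qe_ins X_def by (simp add: case_prod_beta Xf_upd)
    also have "\<dots> = measure_pmf.expectation (pair_pmf (bernoulli_pmf q) Qr)
            (\<lambda>z. (if fst z then 1 else 0) * (if X (snd z) then 1 else 0 :: real))"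
      by (rule Bochner_Integration.integral_cong) auto
    also have "\<dots> = q * pr" unfolding pr_def
      by (subst expectation_pair_prod) (use finB finQr q0 q1 in auto)
    finally show ?thesis .
  qed
  have pE: "measure_pmf.expectation Qe (\<lambda>b. if X b then 1 else 0 :: real) = pr"
  proof -
    have "measure_pmf.expectation Qe (\<lambda>b. if X b then 1 else 0 :: real)
        = measure_pmf.expectation (pair_pmf (bernoulli_pmf q) Qr)
            (\<lambda>z. (\<lambda>_. 1) (fst z) * (if X (snd z) then 1 else 0 :: real))"
      unfolding Qe_ins X_def by (simp add: case_prod_beta Xf_upd)
    also have "\<dots> = pr" unfolding pr_def
      by (subst expectation_pair_prod) (use finB finQr q0 q1 in auto)
    finally show ?thesis .
  qed
  have pr0: "0 \<le> pr" unfolding pr_def by (rule integral_nonneg_AE) auto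
  have pr1: "pr \<le> 1"
  proof -
    have "pr \<le> measure_pmf.expectation Qr (\<lambda>_. 1 :: real)" unfolding pr_def
      by (rule Bochner_Integration.integral_mono) (use finQr in \<open>auto intro: integrable_measure_pmf_finite\<close>)
    then show ?thesis by simp
  qed
  have h0: "measure_pmf.expectation Qe (h 0) \<le> pr"
    unfolding pE[symmetric]
    by (rule Bochner_Integration.integral_mono) (use finQe in \<open>auto intro: integrable_measure_pmf_finite simp: h_def\<close>)
  have h0n: "0 \<le> measure_pmf.expectation Qe (h 0)"
    by (rule integral_nonneg_AE) (use h01 in auto)
  have hi: "measure_pmf.expectation Qe (h i) = 1 - q * pr" if "i \<noteq> 0" for i
  proof -
    have "measure_pmf.expectation Qe (h i) = measure_pmf.expectation Qe
            (\<lambda>b. 1 - (if b e \<and> X b then 1 else 0 :: real))"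
      using that unfolding h_def by (intro Bochner_Integration.integral_cong) auto
    also have "\<dots> = measure_pmf.expectation Qe (\<lambda>_. 1) - measure_pmf.expectation Qe (\<lambda>b. if b e \<and> X b then 1 else 0 :: real)"
      by (rule Bochner_Integration.integral_diff) (use finQe in \<open>auto intro: integrable_measure_pmf_finite\<close>)
    also have "\<dots> = 1 - q * pr" using XE by simp
    finally show ?thesis .
  qed
  obtain k' where k': "k = Suc k'" using k0 by (cases k) auto
  have "(\<Prod>i\<in>{..<k}. measure_pmf.expectation Qe (h i))
      = measure_pmf.expectation Qe (h 0) * (\<Prod>i<k'. measure_pmf.expectation Qe (h (Suc i)))"
    unfolding k' by (rule prod.lessThan_Suc_shift)
  also have "\<dots> = measure_pmf.expectation Qe (h 0) * (1 - q * pr) ^ (k - 1)"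
    using hi k' by simp
  also have "\<dots> \<le> 2 / real c"
    unfolding q_def by (rule arith_bound) (use pr0 pr1 h0 h0n c2 ck in auto)
  finally show ?thesis using main unfolding g_def by linarith
qed


theorem lemma3p4:
  "\<exists>C::real. C > 0 \<and>
    (\<forall>(V::nat set) (E::nat set set) (w::nat set \<Rightarrow> real) (k::nat) (c::nat)
        (\<pi>::nat set list) (Mstar::nat set set).
      simple_graph V E \<and> (\<forall>e\<in>E. w e \<ge> 0) \<and> 2 \<le> c \<and> c \<le> k \<and>
      distinct \<pi> \<and> set \<pi> = E \<and> sorted_wrt (\<lambda>e f. w e \<ge> w f) \<pi> \<and>
      Mstar \<subseteq> E \<and> is_matching Mstar \<and> wt w Mstar = opt E w
      \<longrightarrow>
      measure_pmf.expectation (random_clustering E k c)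
          (\<lambda>A. wt w (free_edges E \<pi> Mstar A \<inter> H_edges E k \<pi> A))
        \<ge> measure_pmf.expectation (random_clustering E k c)
          (\<lambda>A. wt w (free_edges E \<pi> Mstar A))
          - C * (ln (real c) / real c) * opt E w)"
proof (intro exI conjI allI impI)
  show "(2 / ln 2 :: real) > 0" by simp
next
  fix V :: "nat set" and E :: "nat set set" and w :: "nat set \<Rightarrow> real" and k c :: nat
    and \<pi> :: "nat set list" and Mstar :: "nat set set"
  assume H: "simple_graph V E \<and> (\<forall>e\<in>E. w e \<ge> 0) \<and> 2 \<le> c \<and> c \<le> k \<and>
      distinct \<pi> \<and> set \<pi> = E \<and> sorted_wrt (\<lambda>e f. w e \<ge> w f) \<pi> \<and>
      Mstar \<subseteq> E \<and> is_matching Mstar \<and> wt w Mstar = opt E w"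
  then have sg: "simple_graph V E" and w0: "\<forall>e\<in>E. w e \<ge> 0" and c2: "2 \<le> c" and ck: "c \<le> k"
    and setpi: "set \<pi> = E" and ME: "Mstar \<subseteq> E" and opt: "wt w Mstar = opt E w" by auto
  have fE: "finite E"
  proof -
    have "E \<subseteq> Pow V" using sg unfolding simple_graph_def by auto
    moreover have "finite V" using sg unfolding simple_graph_def by auto
    ultimately show ?thesis by (meson finite_Pow_iff finite_subset)
  qed
  have fM: "finite Mstar" using fE ME by (rule finite_subset[rotated])
  have k0: "0 < k" using c2 ck by simp
  define R where "R = random_clustering E k c"
  define F where "F = free_edges E \<pi> Mstar"
  define HH where "HH = H_edges E k \<pi>"
  define ind where "ind = (\<lambda>e A. if e \<in> F A \<and> e \<notin> HH A then 1 else 0 :: real)"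
  have finR: "finite (set_pmf R)"
  proof -
    have "R = map_pmf (\<lambda>B e. {i\<in>{..<k}. B i e})
           (Pi_pmf {..<k} (\<lambda>_. False) (\<lambda>_. Pi_pmf E False (\<lambda>_. bernoulli_pmf (real c / real k))))"
      unfolding R_def by (rule rc_alt[OF fE ck k0])
    moreover have "finite (set_pmf (Pi_pmf {..<k} (\<lambda>_. False) (\<lambda>_. Pi_pmf E False (\<lambda>_. bernoulli_pmf (real c / real k)))))"
      by (intro finite_set_Pi_pmf) (auto intro!: finite_set_Pi_pmf fE finite_subset[of _ UNIV])
    ultimately show ?thesis by simp
  qed
  have FM: "F A \<subseteq> Mstar" for A unfolding F_def free_edges_def by auto
  have decomp: "wt w (F A) - wt w (F A \<inter> HH A) = (\<Sum>e\<in>Mstar. w e * ind e A)" for A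
  proof -
    have fF: "finite (F A)" using FM fM by (rule finite_subset)
    have "wt w (F A) = wt w (F A \<inter> HH A) + wt w (F A - HH A)"
      unfolding wt_def using fF by (metis Int_Diff_Un Int_Diff_disjoint finite_Diff finite_Int sum.union_disjoint)
    moreover have "wt w (F A - HH A) = (\<Sum>e\<in>Mstar. w e * ind e A)"
    proof -
      have "(\<Sum>e\<in>Mstar. w e * ind e A) = (\<Sum>e\<in>Mstar. if e \<in> F A - HH A then w e else 0)"
        unfolding ind_def by (intro sum.cong) auto
      also have "\<dots> = sum w (Mstar \<inter> (F A - HH A))" by (rule sum.inter_restrict[symmetric]) (rule fM)
      also have "Mstar \<inter> (F A - HH A) = F A - HH A" using FM by auto
      finally show ?thesis unfolding wt_def by simp
    qed
    ultimately show ?thesis by simp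
  qed
  have "measure_pmf.expectation R (\<lambda>A. wt w (F A)) - measure_pmf.expectation R (\<lambda>A. wt w (F A \<inter> HH A))
      = measure_pmf.expectation R (\<lambda>A. wt w (F A) - wt w (F A \<inter> HH A))"
    by (rule Bochner_Integration.integral_diff[symmetric]) (use finR in \<open>auto intro: integrable_measure_pmf_finite\<close>)
  also have "\<dots> = measure_pmf.expectation R (\<lambda>A. \<Sum>e\<in>Mstar. w e * ind e A)"
    using decomp by simp
  also have "\<dots> = (\<Sum>e\<in>Mstar. measure_pmf.expectation R (\<lambda>A. w e * ind e A))"
    by (rule Bochner_Integration.integral_sum) (use finR in \<open>auto intro: integrable_measure_pmf_finite\<close>)
  also have "\<dots> = (\<Sum>e\<in>Mstar. w e * measure_pmf.expectation R (ind e))"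
    by simp
  also have "\<dots> \<le> (\<Sum>e\<in>Mstar. w e * (2 / real c))"
  proof (rule sum_mono)
    fix e assume eM: "e \<in> Mstar"
    have "measure_pmf.expectation R (ind e) \<le> 2 / real c"
      unfolding R_def ind_def F_def HH_def
      by (rule edge_bound[OF fE _ _ eM c2 ck]) (use eM ME setpi in auto)
    moreover have "0 \<le> w e" using eM ME w0 by auto
    ultimately show "w e * measure_pmf.expectation R (ind e) \<le> w e * (2 / real c)"
      using mult_left_mono by blast
  qed
  also have "\<dots> = 2 / real c * opt E w"
    using opt unfolding wt_def by (simp add: sum_distrib_right[symmetric] sum_divide_distrib[symmetric] mult_ac)
  also have "\<dots> \<le> 2 / ln 2 * (ln (real c) / real c) * opt E w"
  proof -
    have o0: "0 \<le> opt E w" using opt[symmetric] ME w0 unfolding wt_def by (auto intro!: sum_nonneg)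
    have "ln 2 \<le> ln (real c)" using c2 by simp
    then have "2 / real c \<le> 2 / ln 2 * (ln (real c) / real c)"
      using c2 by (simp add: field_simps)
    then show ?thesis using o0 by (rule mult_right_mono)
  qed
  finally show "measure_pmf.expectation (random_clustering E k c)
          (\<lambda>A. wt w (free_edges E \<pi> Mstar A \<inter> H_edges E k \<pi> A))
        \<ge> measure_pmf.expectation (random_clustering E k c)
          (\<lambda>A. wt w (free_edges E \<pi> Mstar A))
          - 2 / ln 2 * (ln (real c) / real c) * opt E w"
    unfolding R_def F_def HH_def by linarith
qed

end
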